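(* Let $\theta>0$, $n\ge2$, $j\in\{2,\ldots,n\}$. Then for $0\le r\le\lfloor n/j\rfloor$, $$\mathbb{P}(\tilde C_j(n)=r)=\Big(\frac{\theta}{j}\Big)^r\frac{1}{r!}\,\frac{n!}{\lambda_n(\theta)\,\theta_{(n)}}\sum_{i=r}^{\lfloor n/j\rfloor}\frac{(-1)^{i-r}}{(i-r)!}\,\frac{\lambda_{n-ji}(\theta)\,\theta_{(n-ji)}}{(n-ji)!}\Big(\frac{\theta}{j}\Big)^{i-r}.$$
   Context: Fix $\theta>0$. Write $\theta_{(0)}=1$ and $\theta_{(m)}=\theta(\theta+1)\cdots(\theta+m-1)$ for $m\ge1$. $\mathrm{ESF}(\theta)$ is the law of $(C_1(n),\ldots,C_n(n))$ with $\mathbb{P}(C_j(n)=c_j,\,1\le j\le n)=\frac{n!}{\theta_{(n)}}\prod_{j=1}^n(\theta/j)^{c_j}/c_j!$ whenever $\sum_j jc_j=n$. For $n\ge1$, $\lambda_n(\theta)=\mathbb{P}(C_1(n)=0)=\frac{n!}{\theta_{(n)}}\sum_{j=0}^n(-1)^j\frac{\theta^j}{j!}\frac{\theta_{(n-j)}}{(n-j)!}$, and $\lambda_0(\theta)=1$. The derangement cycle counts $(\tilde C_2(n),\ldots,\tilde C_n(n))$ have the law of $(C_2(n),\ldots,C_n(n))$ conditioned on $C_1(n)=0$. *)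

theory Defs
  imports "HOL-Analysis.Analysis"
begin

definition cyc_configs :: "nat \<Rightarrow> (nat \<Rightarrow> nat) set" where
  "cyc_configs n = {c. (\<forall>i. c i \<noteq> 0 \<longrightarrow> i \<in> {1..n}) \<and> (\<Sum>i=1..n. i * c i) = n}"

text \<open>ESF(theta) probability mass function; theta_(n) is pochhammer theta n.\<close>
definition esf :: "real \<Rightarrow> nat \<Rightarrow> (nat \<Rightarrow> nat) \<Rightarrow> real" where
  "esf \<theta> n c = (if c \<in> cyc_configs n then
      fact n / pochhammer \<theta> n * (\<Prod>i=1..n. (\<theta> / real i) ^ c i / fact (c i))
    else 0)"

definition esf_prob :: "real \<Rightarrow> nat \<Rightarrow> ((nat \<Rightarrow> nat) \<Rightarrow> bool) \<Rightarrow> real" where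
  "esf_prob \<theta> n P = (\<Sum>c\<in>{c\<in>cyc_configs n. P c}. esf \<theta> n c)"

definition esf_lambda :: "real \<Rightarrow> nat \<Rightarrow> real" where
  "esf_lambda \<theta> n = (if n = 0 then 1 else esf_prob \<theta> n (\<lambda>c. c 1 = 0))"

text \<open>P(tilde C_j(n) = r): law of C_j(n) conditioned on C_1(n) = 0.\<close>
definition derang_prob :: "real \<Rightarrow> nat \<Rightarrow> nat \<Rightarrow> nat \<Rightarrow> real" where
  "derang_prob \<theta> n j r =
     esf_prob \<theta> n (\<lambda>c. c j = r \<and> c 1 = 0) / esf_prob \<theta> n (\<lambda>c. c 1 = 0)"

end

theory Submission
  imports Defs
begin

lemma aux1: "(F::real) \<noteq> 0 \<Longrightarrow> F/(P*Q) * u * v / F = u/P*(v/Q)"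
  by simp

lemma inner_binom:
  fixes a :: real
  shows "(\<Sum>k\<le>q. (-1)^k * a^k / fact k * (a^(q-k) / fact (q-k))) = (if q = 0 then 1 else 0)"
proof -
  have "(\<Sum>k\<le>q. (-1)^k * a^k / fact k * (a^(q-k) / fact (q-k)))
      = (\<Sum>k\<le>q. of_nat (q choose k) * (-a)^k * a^(q-k)) / fact q"
    unfolding sum_divide_distrib
  proof (rule sum.cong)
    fix k assume "k \<in> {..q}"
    then have "k \<le> q" by simp
    then show "(-1)^k * a^k / fact k * (a^(q-k) / fact (q-k)) = of_nat (q choose k) * (-a)^k * a^(q-k) / fact q"
    proof -
      have fs: "(fact q :: real) \<noteq> 0" by simp
      have "of_nat (q choose k) * (-a)^k * a^(q-k) / fact q
         = (fact q / (fact k * fact (q - k))) * ((-1)^k * a^k) * a^(q-k) / fact q"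
        using \<open>k \<le> q\<close> by (simp only: binomial_fact[OF \<open>k \<le> q\<close>] power_minus[of a k])
      also have "\<dots> = (-1)^k * a^k / fact k * (a^(q-k) / fact (q-k))"
        using fs by (rule aux1)
      finally show ?thesis by simp
    qed
  qed simp
  also have "\<dots> = (-a + a)^q / fact q" by (simp only: binomial_ring)
  finally show ?thesis by simp
qed

lemma inversion:
  fixes a :: real and A W :: "nat \<Rightarrow> real" and j :: nat
  assumes j: "j > 0" and W: "\<And>t. W t = (\<Sum>r=0..t div j. a^r / fact r * A (t - j*r))"
  shows "A m = (\<Sum>k=0..m div j. (-1)^k * a^k / fact k * W (m - j*k))"
proof -
  define K where "K = m div j"
  define g where "g = (\<lambda>k r. (-1)^k * a^k / fact k * (a^r / fact r * A (m - j*(k+r))))"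
  have "(\<Sum>k=0..K. (-1)^k * a^k / fact k * W (m - j*k)) = (\<Sum>k=0..K. \<Sum>r=0..K-k. g k r)"
  proof (rule sum.cong)
    fix k assume "k \<in> {0..K}"
    then have kK: "k \<le> K" by simp
    have "j * k \<le> j * K" using kK by simp
    moreover have "j * K \<le> m" unfolding K_def by simp
    ultimately have jk: "j*k \<le> m" by linarith
    have "m = (m - j*k) + k*j" using jk by simp
    then have "m div j = ((m - j*k) + k*j) div j" by simp
    also have "\<dots> = k + (m - j*k) div j" using j by simp
    finally have "(m - j*k) div j = K - k" unfolding K_def by simp
    then show "(-1)^k * a^k / fact k * W (m - j*k) = (\<Sum>r=0..K-k. g k r)"
      unfolding W g_def by (simp add: sum_distrib_left diff_diff_left algebra_simps)
  qed simp
  also have "\<dots> = (\<Sum>(k,r)\<in>{(k,r). k + r \<le> K}. g k r)"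
    by (simp add: sum.Sigma) (rule sum.cong, auto)
  also have "\<dots> = (\<Sum>q\<le>K. \<Sum>k\<le>q. g k (q - k))"
    by (rule sum.triangle_reindex_eq)
  also have "\<dots> = (\<Sum>q\<le>K. A (m - j*q) * (if q = 0 then 1 else 0))"
  proof (rule sum.cong)
    fix q assume "q \<in> {..K}"
    have "(\<Sum>k\<le>q. g k (q - k)) = (\<Sum>k\<le>q. (-1)^k * a^k / fact k * (a^(q-k) / fact (q-k))) * A (m - j*q)"
      unfolding g_def sum_distrib_right by (rule sum.cong) auto
    then show "(\<Sum>k\<le>q. g k (q - k)) = A (m - j*q) * (if q = 0 then 1 else 0)"
      by (simp only: inner_binom) simp
  qed simp
  also have "\<dots> = (\<Sum>q\<le>K. (if q = 0 then A m else 0))" by (rule sum.cong) auto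
  also have "\<dots> = A m" by (simp add: sum.delta)
  finally show ?thesis unfolding K_def by simp
qed
definition wt :: "real \<Rightarrow> nat \<Rightarrow> (nat \<Rightarrow> nat) \<Rightarrow> real" where
  "wt \<theta> N c = (\<Prod>i=1..N. (\<theta> / real i) ^ c i / fact (c i))"

lemma cyc_supp: "c \<in> cyc_configs m \<Longrightarrow> c i \<noteq> 0 \<Longrightarrow> 1 \<le> i \<and> i \<le> m"
  unfolding cyc_configs_def by auto

lemma cyc_sum: "c \<in> cyc_configs m \<Longrightarrow> (\<Sum>i=1..m. i * c i) = m"
  unfolding cyc_configs_def by auto

lemma cyc_bound: assumes "c \<in> cyc_configs m" shows "c i \<le> m"
proof (cases "c i = 0")
  case False
  then have i: "i \<in> {1..m}" using cyc_supp[OF assms] by auto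
  have "c i \<le> i * c i" using i by simp
  also have "\<dots> \<le> (\<Sum>i=1..m. i * c i)" using i by (intro member_le_sum) auto
  finally show ?thesis using cyc_sum[OF assms] by simp
qed simp

lemma cyc_jbound: assumes "c \<in> cyc_configs m" shows "j * c j \<le> m"
proof (cases "c j = 0")
  case False
  then have i: "j \<in> {1..m}" using cyc_supp[OF assms] by auto
  have "j * c j \<le> (\<Sum>i=1..m. i * c i)" using i by (intro member_le_sum) auto
  then show ?thesis using cyc_sum[OF assms] by simp
qed simp

lemma cyc_fin: "finite (cyc_configs m)"
proof -
  have "cyc_configs m \<subseteq> (\<lambda>f i. if i \<in> {1..m} then f i else 0) ` ({1..m} \<rightarrow>\<^sub>E {0..m})"
  proof
    fix c assume c: "c \<in> cyc_configs m"
    let ?f = "restrict c {1..m}"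
    have "?f \<in> {1..m} \<rightarrow>\<^sub>E {0..m}" using cyc_bound[OF c] by auto
    moreover have "c = (\<lambda>i. if i \<in> {1..m} then ?f i else 0)"
      using cyc_supp[OF c] by (auto simp: fun_eq_iff)
    ultimately show "c \<in> (\<lambda>f i. if i \<in> {1..m} then f i else 0) ` ({1..m} \<rightarrow>\<^sub>E {0..m})" by blast
  qed
  then show ?thesis by (rule finite_subset) (intro finite_imageI finite_PiE, auto)
qed

lemma wt_ext: assumes "\<And>i. c i \<noteq> 0 \<Longrightarrow> i \<le> M" "M \<le> N" shows "wt \<theta> N c = wt \<theta> M c"
proof -
  have "\<forall>i\<in>{1..N} - {1..M}. (\<theta> / real i) ^ c i / fact (c i) = 1"
  proof
    fix i assume "i \<in> {1..N} - {1..M}"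
    then have "c i = 0" using assms(1)[of i] by force
    then show "(\<theta> / real i) ^ c i / fact (c i) = 1" by simp
  qed
  moreover have "{1..M} \<subseteq> {1..N}" using assms by auto
  ultimately show ?thesis unfolding wt_def by (rule prod.mono_neutral_right[OF finite_atLeastAtMost, rotated])
qed

lemma sum_ext: assumes "\<And>i. c i \<noteq> 0 \<Longrightarrow> i \<le> M" "M \<le> N" shows "(\<Sum>i=1..N. i * c i) = (\<Sum>i=1..M. i * (c i::nat))"
proof -
  have "\<forall>i\<in>{1..N} - {1..M}. i * c i = 0"
  proof
    fix i assume "i \<in> {1..N} - {1..M}"
    then have "c i = 0" using assms(1)[of i] by force
    then show "i * c i = 0" by simp
  qed
  moreover have "{1..M} \<subseteq> {1..N}" using assms by auto
  ultimately show ?thesis by (rule sum.mono_neutral_right[OF finite_atLeastAtMost, rotated])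
qed

lemma sum_upd: fixes c :: "nat \<Rightarrow> nat" assumes "j \<in> {1..m}"
  shows "(\<Sum>i=1..m. i * (c(j:=v)) i) + j * c j = (\<Sum>i=1..m. i * c i) + j * v"
proof -
  have "(\<Sum>i=1..m. i * (c(j:=v)) i) = j * (c(j:=v)) j + (\<Sum>i\<in>{1..m}-{j}. i * (c(j:=v)) i)"
    using sum.remove[OF finite_atLeastAtMost assms, of "\<lambda>i. i * (c(j:=v)) i"] by simp
  also have "(\<Sum>i\<in>{1..m}-{j}. i * (c(j:=v)) i) = (\<Sum>i\<in>{1..m}-{j}. i * c i)"
    by (rule sum.cong) auto
  finally have A: "(\<Sum>i=1..m. i * (c(j:=v)) i) = j * v + (\<Sum>i\<in>{1..m}-{j}. i * c i)" by simp
  have B: "(\<Sum>i=1..m. i * c i) = j * c j + (\<Sum>i\<in>{1..m}-{j}. i * c i)"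
    using assms by (intro sum.remove[OF finite_atLeastAtMost]) auto
  show ?thesis using A B by simp
qed

lemma wt_upd: assumes "j \<in> {1..m}"
  shows "wt \<theta> m (c(j:=v)) * ((\<theta> / real j) ^ c j / fact (c j)) = wt \<theta> m c * ((\<theta> / real j) ^ v / fact v)"
proof -
  have "wt \<theta> m (c(j:=v)) = (\<theta> / real j) ^ (c(j:=v)) j / fact ((c(j:=v)) j) * (\<Prod>i\<in>{1..m}-{j}. (\<theta> / real i) ^ (c(j:=v)) i / fact ((c(j:=v)) i))"
    unfolding wt_def using assms by (intro prod.remove[OF finite_atLeastAtMost]) auto
  also have "(\<Prod>i\<in>{1..m}-{j}. (\<theta> / real i) ^ (c(j:=v)) i / fact ((c(j:=v)) i)) = (\<Prod>i\<in>{1..m}-{j}. (\<theta> / real i) ^ c i / fact (c i))"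
    by (rule prod.cong) auto
  finally have A: "wt \<theta> m (c(j:=v)) = (\<theta> / real j) ^ v / fact v * (\<Prod>i\<in>{1..m}-{j}. (\<theta> / real i) ^ c i / fact (c i))" by (simp only: fun_upd_same)
  have B: "wt \<theta> m c = (\<theta> / real j) ^ c j / fact (c j) * (\<Prod>i\<in>{1..m}-{j}. (\<theta> / real i) ^ c i / fact (c i))"
    unfolding wt_def using assms by (intro prod.remove[OF finite_atLeastAtMost]) auto
  show ?thesis unfolding A B by (simp only: mult_ac)
qed

lemma esf_prob_wt: "esf_prob \<theta> n P = fact n / pochhammer \<theta> n * (\<Sum>c\<in>{c\<in>cyc_configs n. P c}. wt \<theta> n c)"
  unfolding esf_prob_def sum_distrib_left by (rule sum.cong) (auto simp: esf_def wt_def)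

definition Wf :: "real \<Rightarrow> nat \<Rightarrow> real" where
  "Wf \<theta> m = (\<Sum>c\<in>{c\<in>cyc_configs m. c 1 = 0}. wt \<theta> m c)"
definition Af :: "real \<Rightarrow> nat \<Rightarrow> nat \<Rightarrow> real" where
  "Af \<theta> j m = (\<Sum>c\<in>{c\<in>cyc_configs m. c 1 = 0 \<and> c j = 0}. wt \<theta> m c)"
definition Bf :: "real \<Rightarrow> nat \<Rightarrow> nat \<Rightarrow> nat \<Rightarrow> real" where
  "Bf \<theta> j m r = (\<Sum>c\<in>{c\<in>cyc_configs m. c j = r \<and> c 1 = 0}. wt \<theta> m c)"

lemma cyc0: "cyc_configs 0 = {\<lambda>_. 0}"
  unfolding cyc_configs_def by (auto simp: fun_eq_iff)

lemma lambda_Wf: assumes "\<theta> > 0" shows "esf_lambda \<theta> m * pochhammer \<theta> m / fact m = Wf \<theta> m"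
proof (cases "m = 0")
  case True
  have "{c \<in> cyc_configs 0. c 1 = 0} = {\<lambda>_. 0}" by (auto simp: cyc0)
  then show ?thesis using True by (simp add: esf_lambda_def Wf_def wt_def)
next
  case False
  have p: "pochhammer \<theta> m > 0" using pochhammer_pos assms by blast
  have "esf_lambda \<theta> m = fact m / pochhammer \<theta> m * Wf \<theta> m"
    using False by (simp add: esf_lambda_def esf_prob_wt Wf_def)
  then show ?thesis using p by simp
qed

lemma W_split: assumes "j \<ge> 2" shows "Wf \<theta> m = (\<Sum>r=0..m div j. Bf \<theta> j m r)"
proof -
  let ?S = "{c\<in>cyc_configs m. c 1 = 0}"
  have fS: "finite ?S" using cyc_fin by auto
  have im: "(\<lambda>c. c j) ` ?S \<subseteq> {0..m div j}"
  proof
    fix x assume "x \<in> (\<lambda>c. c j) ` ?S"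
    then obtain c where c: "c \<in> cyc_configs m" "x = c j" by auto
    have "c j * j \<le> m" using cyc_jbound[OF c(1), of j] by (simp add: mult.commute)
    then show "x \<in> {0..m div j}" using c assms by (simp add: less_eq_div_iff_mult_less_eq)
  qed
  have "(\<Sum>r=0..m div j. Bf \<theta> j m r) = (\<Sum>r=0..m div j. \<Sum>c\<in>{x. x \<in> ?S \<and> x j = r}. wt \<theta> m c)"
    unfolding Bf_def by (intro sum.cong refl arg_cong[where f="\<lambda>A. sum _ A"]) auto
  also have "\<dots> = Wf \<theta> m" unfolding Wf_def by (rule sum.group[OF fS _ im]) simp
  finally show ?thesis by simp
qed

lemma B_eq: assumes j2: "j \<ge> 2" and jr: "j*r \<le> m"
  shows "Bf \<theta> j m r = (\<theta>/real j)^r / fact r * Af \<theta> j (m - j*r)"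
proof (cases "j \<le> m")
  case False
  then have "r = 0" using jr
    by (cases r) auto
  then show ?thesis unfolding Bf_def Af_def by (simp add: conj_commute)
next
  case True
  then have jm: "j \<in> {1..m}" using j2 by auto
  have j1: "j \<noteq> 1" using j2 by auto
  let ?S = "{c\<in>cyc_configs m. c j = r \<and> c 1 = 0}"
  let ?T = "{c\<in>cyc_configs (m - j*r). c 1 = 0 \<and> c j = 0}"
  let ?a = "(\<theta>/real j)^r / fact r"
  have ST: "c(j:=0) \<in> ?T" if c: "c \<in> ?S" for c
  proof -
    let ?d = "c(j:=0)"
    have cc: "c \<in> cyc_configs m" "c j = r" "c 1 = 0" using c by auto
    have "(\<Sum>i=1..m. i * ?d i) + j * c j = (\<Sum>i=1..m. i * c i) + j * 0" by (rule sum_upd[OF jm])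
    then have sd: "(\<Sum>i=1..m. i * ?d i) = m - j*r" using cyc_sum[OF cc(1)] cc(2) by simp
    have supp: "1 \<le> i \<and> i \<le> m - j*r" if "?d i \<noteq> 0" for i
    proof -
      have ci: "c i \<noteq> 0" "i \<noteq> j" using that by (auto split: if_splits)
      then have i: "i \<in> {1..m}" using cyc_supp[OF cc(1)] by auto
      have "i \<le> i * ?d i" using that by simp
      also have "\<dots> \<le> (\<Sum>i=1..m. i * ?d i)" using i by (intro member_le_sum) auto
      finally show ?thesis using sd i by simp
    qed
    have "(\<Sum>i=1..m - j*r. i * ?d i) = (\<Sum>i=1..m. i * ?d i)"
      by (rule sum_ext[symmetric]) (use supp in auto)
    then have "?d \<in> cyc_configs (m - j*r)" unfolding cyc_configs_def using supp sd by auto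
    then show ?thesis using cc j1 by simp
  qed
  have TS: "b(j:=r) \<in> ?S" if b: "b \<in> ?T" for b
  proof -
    let ?e = "b(j:=r)"
    have bb: "b \<in> cyc_configs (m - j*r)" "b 1 = 0" "b j = 0" using b by auto
    have "(\<Sum>i=1..m. i * ?e i) + j * b j = (\<Sum>i=1..m. i * b i) + j * r" by (rule sum_upd[OF jm])
    moreover have "(\<Sum>i=1..m. i * b i) = (\<Sum>i=1..m - j*r. i * b i)"
      by (rule sum_ext) (use cyc_supp[OF bb(1)] in auto)
    ultimately have se: "(\<Sum>i=1..m. i * ?e i) = m" using cyc_sum[OF bb(1)] bb(3) jr by simp
    have supp: "i \<in> {1..m}" if "?e i \<noteq> 0" for i
      using that jm cyc_supp[OF bb(1), of i] by (auto split: if_splits)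
    have "?e \<in> cyc_configs m" unfolding cyc_configs_def using supp se by auto
    then show ?thesis using bb j1 by simp
  qed
  have "Bf \<theta> j m r = (\<Sum>c\<in>?T. ?a * wt \<theta> (m - j*r) c)"
    unfolding Bf_def
  proof (rule sum.reindex_bij_witness[where j="\<lambda>c. c(j:=0)" and i="\<lambda>c. c(j:=r)"])
    fix c assume c: "c \<in> ?S"
    then show "c(j := 0, j := r) = c" by auto
    show "c(j:=0) \<in> ?T" using ST[OF c] .
    have "wt \<theta> (m - j*r) (c(j:=0)) = wt \<theta> m (c(j:=0))"
      by (rule wt_ext[symmetric]) (use cyc_supp ST[OF c] in auto)
    moreover have "wt \<theta> m (c(j:=0)) * ((\<theta> / real j) ^ c j / fact (c j)) = wt \<theta> m c * ((\<theta> / real j) ^ 0 / fact 0)"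
      by (rule wt_upd[OF jm])
    ultimately show "?a * wt \<theta> (m - j*r) (c(j:=0)) = wt \<theta> m c" using c by (simp add: mult.commute)
  next
    fix b assume b: "b \<in> ?T"
    then show "b(j := r, j := 0) = b" by auto
    show "b(j:=r) \<in> ?S" using TS[OF b] .
  qed
  also have "\<dots> = ?a * Af \<theta> j (m - j*r)" unfolding Af_def sum_distrib_left ..
  finally show ?thesis .
qed


theorem mainTheorem10:
  fixes \<theta> :: real and n j r :: nat
  assumes "\<theta> > 0" and "n \<ge> 2" and "j \<in> {2..n}" and "r \<le> n div j"
  shows "derang_prob \<theta> n j r =
    (\<theta> / real j) ^ r * (1 / fact r) * (fact n / (esf_lambda \<theta> n * pochhammer \<theta> n)) *
    (\<Sum>i=r..n div j. (-1) ^ (i - r) / fact (i - r) *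
       (esf_lambda \<theta> (n - j * i) * pochhammer \<theta> (n - j * i) / fact (n - j * i)) *
       (\<theta> / real j) ^ (i - r))"
proof -
  define a where "a = \<theta> / real j"
  define K where "K = n div j"
  have j2: "j \<ge> 2" "j \<le> n" using assms(3) by auto
  have jpos: "j > 0" using j2 by simp
  have "r * j \<le> n" using assms(4) jpos by (simp add: less_eq_div_iff_mult_less_eq)
  then have jr: "j * r \<le> n" by (simp add: mult.commute)
  have p: "pochhammer \<theta> n > 0" using pochhammer_pos assms(1) by blast
  define F where "F = fact n / pochhammer \<theta> n"
  have F: "F \<noteq> 0" unfolding F_def using p by simp
  have WA: "Wf \<theta> t = (\<Sum>r=0..t div j. a^r / fact r * Af \<theta> j (t - j*r))" for t
  proof -
    have "Wf \<theta> t = (\<Sum>r=0..t div j. Bf \<theta> j t r)" by (rule W_split[OF j2(1)])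
    also have "\<dots> = (\<Sum>r=0..t div j. a^r / fact r * Af \<theta> j (t - j*r))"
    proof (rule sum.cong)
      fix r assume "r \<in> {0..t div j}"
      then have "r * j \<le> t" using jpos by (simp add: less_eq_div_iff_mult_less_eq)
      then have "j * r \<le> t" by (simp add: mult.commute)
      then show "Bf \<theta> j t r = a^r / fact r * Af \<theta> j (t - j*r)"
        unfolding a_def by (rule B_eq[OF j2(1)])
    qed simp
    finally show ?thesis .
  qed
  have inv: "Af \<theta> j (n - j*r) = (\<Sum>k=0..(n - j*r) div j. (-1)^k * a^k / fact k * Wf \<theta> (n - j*r - j*k))"
    by (rule inversion[OF jpos WA])
  have "n = (n - j*r) + r*j" using jr by simp
  then have "n div j = ((n - j*r) + r*j) div j" by simp
  also have "\<dots> = r + (n - j*r) div j" using jpos by simp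
  finally have dv: "(n - j*r) div j = K - r" unfolding K_def by simp
  have rK: "r \<le> K" using assms(4) unfolding K_def .
  have LHS: "derang_prob \<theta> n j r = Bf \<theta> j n r / Wf \<theta> n"
    unfolding derang_prob_def esf_prob_wt Bf_def Wf_def using F unfolding F_def by simp
  have Wl: "esf_lambda \<theta> m * pochhammer \<theta> m / fact m = Wf \<theta> m" for m
    by (rule lambda_Wf[OF assms(1)])
  have Fn: "fact n / (esf_lambda \<theta> n * pochhammer \<theta> n) = 1 / Wf \<theta> n"
    unfolding Wl[of n, symmetric] by simp
  have "(\<Sum>i=r..n div j. (-1) ^ (i - r) / fact (i - r) *
       (esf_lambda \<theta> (n - j * i) * pochhammer \<theta> (n - j * i) / fact (n - j * i)) *
       (\<theta> / real j) ^ (i - r))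
     = (\<Sum>i=0+r..(K-r)+r. (-1) ^ (i - r) / fact (i - r) * Wf \<theta> (n - j * i) * a ^ (i - r))"
    unfolding Wl a_def K_def using rK unfolding K_def by simp
  also have "\<dots> = (\<Sum>k=0..K-r. (-1) ^ k / fact k * Wf \<theta> (n - j * (k + r)) * a ^ k)"
    by (subst sum.shift_bounds_cl_nat_ivl) simp
  also have "\<dots> = Af \<theta> j (n - j*r)"
    unfolding inv dv by (rule sum.cong) (simp_all add: algebra_simps diff_diff_left)
  finally have S: "(\<Sum>i=r..n div j. (-1) ^ (i - r) / fact (i - r) *
       (esf_lambda \<theta> (n - j * i) * pochhammer \<theta> (n - j * i) / fact (n - j * i)) *
       (\<theta> / real j) ^ (i - r)) = Af \<theta> j (n - j*r)" .
  show ?thesis unfolding LHS Fn S B_eq[OF j2(1) jr] a_def by simp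
qed

end
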